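(* Let $u_0,v_0>0$, $s_0>1$, let $\omega_0>0$ and $\omega_1,\omega_2,\dots\in\mathbb{R}$, and let $U_k,V_k:\mathbb{R}\to\mathbb{R}$ ($k\ge1$) be real analytic $2\pi$-periodic functions with Fourier expansions $U_k(t)=\sum_{n\in\mathbb{Z}}\hat U_k(n)e^{int}$, $V_k(t)=\sum_{n\in\mathbb{Z}}\hat V_k(n)e^{int}$. Put $\omega(\varepsilon)=\sum_{k\ge0}\omega_k\varepsilon^k$, $U(t,\varepsilon)=\sum_{k\ge1}U_k(t)\varepsilon^k$, $V(t,\varepsilon)=\sum_{k\ge1}V_k(t)\varepsilon^k$, and let $d_k(t)$ denote the coefficient of $\varepsilon^k$ in the formal Taylor expansion in $\varepsilon$ of $$\frac{U(t,\varepsilon)+u_0}{V(t-s_0\omega(\varepsilon),\varepsilon)+v_0},$$ so that $d_0=u_0/v_0$. For $k\ge2$ write $d_k(t)=\sum_{n\in\mathbb{Z}}\hat d_k(n)e^{int}$ with $\hat d_k(n)=\overline{\hat d_k(-n)}$. Then for every $k\ge2$ and $n\in\mathbb{Z}$, $$\hat d_k(n)=\frac{d_0}{v_0}\,ni\,\omega_{k-1}s_0\,\hat V_1(n)e^{-ni\omega_0s_0}+h,$$ where $h$ is an expression whose terms depend only on $\hat U_1,\hat V_1,\dots,\hat U_k,\hat V_k$ and $\omega_0,\dots,\omega_{k-2}$ (and on $n$, $u_0$, $v_0$, $s_0$).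
   Context: The expansion of $V_j(t-s_0\omega(\varepsilon))$ in $\varepsilon$ is the Taylor expansion of $V_j$ about $t-s_0\omega_0$ composed with $\omega(\varepsilon)-\omega_0$; the quotient is expanded as a formal power series in $\varepsilon$. *)

theory Defs
  imports "HOL-Analysis.Analysis" "HOL-Computational_Algebra.Formal_Power_Series"
begin

definition real_analytic :: "(real \<Rightarrow> real) \<Rightarrow> bool" where
  "real_analytic f \<longleftrightarrow> (\<forall>x. \<exists>r>0. \<exists>a::nat \<Rightarrow> real.
      \<forall>y. \<bar>y - x\<bar> < r \<longrightarrow> (\<lambda>m. a m * (y - x) ^ m) sums f y)"

definition periodic_2pi :: "(real \<Rightarrow> real) \<Rightarrow> bool" where
  "periodic_2pi f \<longleftrightarrow> (\<forall>t. f (t + 2 * pi) = f t)"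

definition fcoeff :: "(real \<Rightarrow> real) \<Rightarrow> int \<Rightarrow> complex" where
  "fcoeff f n = integral {0..2 * pi} (\<lambda>t. complex_of_real (f t) * cis (- (of_int n * t))) / complex_of_real (2 * pi)"

definition taylor_fps :: "(real \<Rightarrow> real) \<Rightarrow> real \<Rightarrow> real fps" where
  "taylor_fps f x = Abs_fps (\<lambda>m. (deriv ^^ m) f x / fact m)"

definition omega_fps :: "(nat \<Rightarrow> real) \<Rightarrow> real fps" where
  "omega_fps \<omega> = Abs_fps \<omega>"

text \<open>Formal expansion of V(t - s0 omega(eps), eps) = sum_{j>=1} V_j(t - s0 omega(eps)) eps^j,
  where V_j(t - s0 omega(eps)) is the Taylor series of V_j about t - s0 omega_0 composed
  with -s0 (omega(eps) - omega_0).\<close>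
definition shifted_V_fps :: "(nat \<Rightarrow> real \<Rightarrow> real) \<Rightarrow> (nat \<Rightarrow> real) \<Rightarrow> real \<Rightarrow> real \<Rightarrow> real fps" where
  "shifted_V_fps V \<omega> s0 t = Abs_fps (\<lambda>k. \<Sum>j=1..k.
     fps_nth (fps_compose (taylor_fps (V j) (t - s0 * \<omega> 0))
                  (fps_const (- s0) * (omega_fps \<omega> - fps_const (\<omega> 0)))) (k - j))"

definition U_fps :: "(nat \<Rightarrow> real \<Rightarrow> real) \<Rightarrow> real \<Rightarrow> real fps" where
  "U_fps U t = Abs_fps (\<lambda>k. if k = 0 then 0 else U k t)"

definition dcoef :: "(nat \<Rightarrow> real \<Rightarrow> real) \<Rightarrow> (nat \<Rightarrow> real \<Rightarrow> real) \<Rightarrow> (nat \<Rightarrow> real)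
    \<Rightarrow> real \<Rightarrow> real \<Rightarrow> real \<Rightarrow> nat \<Rightarrow> real \<Rightarrow> real" where
  "dcoef U V \<omega> u0 v0 s0 k t =
     fps_nth ((U_fps U t + fps_const u0) * inverse (shifted_V_fps V \<omega> s0 t + fps_const v0)) k"

end

theory Submission
  imports Defs
begin


lemma fps_recur:
  fixes D X Y :: "real fps"
  assumes "D * Y = X" "(fps_nth Y 0) \<noteq> 0"
  shows "(fps_nth D i) = ((fps_nth X i) - (\<Sum>j=0..<i. (fps_nth D j) * (fps_nth Y (i-j)))) / (fps_nth Y 0)"
proof -
  have "(fps_nth X i) = (\<Sum>j=0..i. (fps_nth D j) * (fps_nth Y (i-j)))" using assms(1) fps_mult_nth[of D Y i] by simp
  also have "\<dots> = (fps_nth D i) * (fps_nth Y 0) + (\<Sum>j=0..<i. (fps_nth D j) * (fps_nth Y (i-j)))"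
    by (subst sum.last_plus) auto
  finally show ?thesis using assms(2) by (simp add: field_simps)
qed

lemma fps_div_below:
  fixes X Y X' Y' :: "real fps"
  assumes Y0: "(fps_nth Y 0) \<noteq> 0" "(fps_nth Y' 0) = (fps_nth Y 0)" and XX: "\<forall>i<k. (fps_nth X i) = (fps_nth X' i)" and YY: "\<forall>i<k. (fps_nth Y i) = (fps_nth Y' i)"
  shows "\<forall>i<k. fps_nth (X * inverse Y) i = fps_nth (X' * inverse Y') i"
proof -
  define D where "D = X * inverse Y"
  define D' where "D' = X' * inverse Y'"
  have DY: "D * Y = X" unfolding D_def using Y0 by (simp add: mult.assoc inverse_mult_eq_1)
  have DY': "D' * Y' = X'" unfolding D'_def using Y0 by (simp add: mult.assoc inverse_mult_eq_1)
  have "i < k \<longrightarrow> (fps_nth D i) = (fps_nth D' i)" for i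
  proof (induction i rule: less_induct)
    case (less i)
    show ?case
    proof
      assume ik: "i < k"
      have "(\<Sum>j=0..<i. (fps_nth D j) * (fps_nth Y (i-j))) = (\<Sum>j=0..<i. (fps_nth D' j) * (fps_nth Y' (i-j)))"
        by (rule sum.cong) (use less ik YY in auto)
      then show "(fps_nth D i) = (fps_nth D' i)"
        using fps_recur[OF DY Y0(1), of i] fps_recur[OF DY', of i] Y0 XX ik by simp
    qed
  qed
  then show ?thesis unfolding D_def D'_def by blast
qed

lemma fps_div_at:
  fixes X Y X' Y' :: "real fps"
  assumes Y0: "(fps_nth Y 0) \<noteq> 0" "(fps_nth Y' 0) = (fps_nth Y 0)" and XX: "\<forall>i\<le>k. (fps_nth X i) = (fps_nth X' i)" and YY: "\<forall>i<k. (fps_nth Y i) = (fps_nth Y' i)"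
    and k: "k > 0"
  shows "fps_nth (X * inverse Y) k = fps_nth (X' * inverse Y') k - (fps_nth X 0) / (fps_nth Y 0) / (fps_nth Y 0) * ((fps_nth Y k) - (fps_nth Y' k))"
proof -
  define D where "D = X * inverse Y"
  define D' where "D' = X' * inverse Y'"
  have DY: "D * Y = X" unfolding D_def using Y0 by (simp add: mult.assoc inverse_mult_eq_1)
  have DY': "D' * Y' = X'" unfolding D'_def using Y0 by (simp add: mult.assoc inverse_mult_eq_1)
  have below: "\<forall>i<k. (fps_nth D i) = (fps_nth D' i)" unfolding D_def D'_def
    by (rule fps_div_below) (use Y0 XX YY in auto)
  have D0: "(fps_nth D 0) = (fps_nth X 0) / (fps_nth Y 0)" using fps_recur[OF DY Y0(1), of 0] by simp
  have split: "(\<Sum>j=0..<k. (fps_nth E j) * (fps_nth Z (k-j))) = (fps_nth E 0) * (fps_nth Z k) + (\<Sum>j=1..<k. (fps_nth E j) * (fps_nth Z (k-j)))" for E Z :: "real fps"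
    using k by (subst sum.atLeast_Suc_lessThan) auto
  have mid: "(\<Sum>j=1..<k. (fps_nth D j) * (fps_nth Y (k-j))) = (\<Sum>j=1..<k. (fps_nth D' j) * (fps_nth Y' (k-j)))"
    by (rule sum.cong) (use below YY in auto)
  have "(fps_nth D k) = ((fps_nth X k) - ((fps_nth D 0) * (fps_nth Y k) + (\<Sum>j=1..<k. (fps_nth D j) * (fps_nth Y (k-j))))) / (fps_nth Y 0)"
    using fps_recur[OF DY Y0(1), of k] split by simp
  moreover have "(fps_nth D' k) = ((fps_nth X k) - ((fps_nth D 0) * (fps_nth Y' k) + (\<Sum>j=1..<k. (fps_nth D j) * (fps_nth Y (k-j))))) / (fps_nth Y 0)"
    using fps_recur[OF DY', of k] split[of D' Y'] Y0 XX mid below k by simp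
  ultimately have "(fps_nth D k) = (fps_nth D' k) - (fps_nth D 0) * ((fps_nth Y k) - (fps_nth Y' k)) / (fps_nth Y 0)"
    using Y0 by (simp add: field_simps)
  then show ?thesis unfolding D_def D'_def using D0 D_def by simp
qed



lemma fps_power_agree:
  fixes A B :: "real fps"
  assumes "\<forall>i\<le>m. fps_nth A i = fps_nth B i"
  shows "\<forall>j\<le>m. fps_nth (A^p) j = fps_nth (B^p) j"
proof (induction p)
  case 0 show ?case by simp
next
  case (Suc p)
  show ?case
  proof (intro allI impI)
    fix j assume j: "j \<le> m"
    have "fps_nth (A^Suc p) j = (\<Sum>l=0..j. fps_nth A l * fps_nth (A^p) (j-l))"
      by (simp add: fps_mult_nth)
    also have "\<dots> = (\<Sum>l=0..j. fps_nth B l * fps_nth (B^p) (j-l))"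
      by (rule sum.cong) (use assms Suc j in auto)
    also have "\<dots> = fps_nth (B^Suc p) j" by (simp add: fps_mult_nth)
    finally show "fps_nth (A^Suc p) j = fps_nth (B^Suc p) j" .
  qed
qed

lemma fps_compose_agree:
  fixes T A B :: "real fps"
  assumes "\<forall>i\<le>m. fps_nth A i = fps_nth B i"
  shows "fps_nth (T oo A) m = fps_nth (T oo B) m"
  unfolding fps_compose_nth
  by (rule sum.cong) (use fps_power_agree[OF assms] in auto)

lemma fps_power_perturb:
  fixes A :: "real fps"
  assumes A0: "fps_nth A 0 = 0" and m: "m \<ge> 1"
  shows "fps_nth ((A + fps_const d * fps_X^m)^i) m = fps_nth (A^i) m + (if i = 1 then d else 0)"
proof -
  define E where "E = fps_const d * fps_X^m"
  have E0: "fps_nth E 0 = 0" using m by (simp add: E_def)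
  have Em: "fps_nth (E * S) m = d * fps_nth S 0" for S
    unfolding E_def by (simp add: mult.assoc fps_X_power_mult_nth)
  consider "i = 0" | "i = 1" | "i \<ge> 2" by linarith
  then show ?thesis
  proof cases
    case 1 then show ?thesis using m by simp
  next
    case 2 then show ?thesis using m by (simp add: E_def)
  next
    case 3
    define S where "S = (\<Sum>j<i. A^(i - Suc j) * (A+E)^j)"
    have diff: "(A+E)^i - A^i = E * S"
      unfolding S_def by (simp add: power_diff_sumr2)
    have "fps_nth S 0 = (\<Sum>j<i. (fps_nth A 0)^(i - Suc j) * (fps_nth (A+E) 0)^j)"
      unfolding S_def by (simp add: fps_sum_nth fps_nth_power_0)
    also have "\<dots> = 0"
    proof (rule sum.neutral, intro ballI)
      fix j assume "j \<in> {..<i}"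
      then have "i - Suc j \<noteq> 0 \<or> j \<noteq> 0" using 3 by auto
      then show "(fps_nth A 0)^(i - Suc j) * (fps_nth (A+E) 0)^j = 0"
        using A0 E0 by auto
    qed
    finally have "fps_nth ((A+E)^i - A^i) m = 0" using diff Em by simp
    then show ?thesis using 3 by (simp add: E_def)
  qed
qed

lemma fps_compose_perturb:
  fixes T A :: "real fps"
  assumes A0: "fps_nth A 0 = 0" and m: "m \<ge> 1"
  shows "fps_nth (T oo (A + fps_const d * fps_X^m)) m = fps_nth (T oo A) m + fps_nth T 1 * d"
proof -
  have "fps_nth (T oo (A + fps_const d * fps_X^m)) m
      = (\<Sum>i=0..m. fps_nth T i * fps_nth (A^i) m + (if i = 1 then fps_nth T i * d else 0))"
    unfolding fps_compose_nth
    by (rule sum.cong) (auto simp: fps_power_perturb[OF A0 m] algebra_simps)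
  also have "\<dots> = fps_nth (T oo A) m + fps_nth T 1 * d"
    using m by (simp add: sum.distrib fps_compose_nth)
  finally show ?thesis .
qed



definition Gfps :: "(nat \<Rightarrow> real) \<Rightarrow> real \<Rightarrow> real fps" where
  "Gfps \<omega> s0 = fps_const (- s0) * (omega_fps \<omega> - fps_const (\<omega> 0))"

lemma Gfps_nth: "fps_nth (Gfps \<omega> s0) i = (if i = 0 then 0 else - s0 * \<omega> i)"
  by (simp add: Gfps_def omega_fps_def)

lemma shifted_nth: "fps_nth (shifted_V_fps V \<omega> s0 t) k =
   (\<Sum>j=1..k. fps_nth (taylor_fps (V j) (t - s0 * \<omega> 0) oo Gfps \<omega> s0) (k - j))"
  by (simp add: shifted_V_fps_def Gfps_def)

lemma shifted_perturb:
  fixes k :: nat and \<omega> :: "nat \<Rightarrow> real"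
  assumes k: "k \<ge> 2"
  defines "\<omega>' \<equiv> (\<lambda>j. if j \<le> k - 2 then \<omega> j else 0)"
  shows "\<forall>i<k. fps_nth (shifted_V_fps V \<omega> s0 t) i = fps_nth (shifted_V_fps V \<omega>' s0 t) i"
    and "fps_nth (shifted_V_fps V \<omega> s0 t) k = fps_nth (shifted_V_fps V \<omega>' s0 t) k
           + deriv (V 1) (t - s0 * \<omega> 0) * (- s0 * \<omega> (k - 1))"
proof -
  have w0: "\<omega>' 0 = \<omega> 0" by (simp add: \<omega>'_def)
  have agree: "fps_nth (T oo Gfps \<omega> s0) m = fps_nth (T oo Gfps \<omega>' s0) m" if "m \<le> k - 2" for T m
    by (rule fps_compose_agree) (use that in \<open>auto simp: Gfps_nth \<omega>'_def\<close>)
  show "\<forall>i<k. fps_nth (shifted_V_fps V \<omega> s0 t) i = fps_nth (shifted_V_fps V \<omega>' s0 t) i"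
  proof (intro allI impI)
    fix i assume "i < k"
    then show "fps_nth (shifted_V_fps V \<omega> s0 t) i = fps_nth (shifted_V_fps V \<omega>' s0 t) i"
      unfolding shifted_nth w0 by (intro sum.cong refl agree) auto
  qed
  define P where "P = Gfps \<omega>' s0 + fps_const (- s0 * \<omega> (k - 1)) * fps_X^(k-1)"
  have P1: "fps_nth (T oo Gfps \<omega> s0) (k-1) = fps_nth (T oo P) (k-1)" for T
    by (rule fps_compose_agree) (use k in \<open>auto simp: Gfps_nth \<omega>'_def P_def\<close>)
  have P2: "fps_nth (T oo P) (k-1) = fps_nth (T oo Gfps \<omega>' s0) (k-1) + fps_nth T 1 * (- s0 * \<omega> (k - 1))" for T
    unfolding P_def by (rule fps_compose_perturb) (use k in \<open>auto simp: Gfps_nth\<close>)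
  have T1: "fps_nth (taylor_fps f x) 1 = deriv f x" for f x
    by (simp add: taylor_fps_def)
  have "fps_nth (shifted_V_fps V \<omega> s0 t) k
     = fps_nth (taylor_fps (V 1) (t - s0 * \<omega> 0) oo Gfps \<omega> s0) (k - 1)
       + (\<Sum>j=2..k. fps_nth (taylor_fps (V j) (t - s0 * \<omega> 0) oo Gfps \<omega> s0) (k - j))"
    unfolding shifted_nth using k by (subst sum.atLeast_Suc_atMost) (auto simp: numeral_2_eq_2)
  also have "(\<Sum>j=2..k. fps_nth (taylor_fps (V j) (t - s0 * \<omega> 0) oo Gfps \<omega> s0) (k - j))
      = (\<Sum>j=2..k. fps_nth (taylor_fps (V j) (t - s0 * \<omega>' 0) oo Gfps \<omega>' s0) (k - j))"
    unfolding w0 by (intro sum.cong refl agree) auto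
  also have "fps_nth (taylor_fps (V 1) (t - s0 * \<omega> 0) oo Gfps \<omega> s0) (k - 1)
      = fps_nth (taylor_fps (V 1) (t - s0 * \<omega>' 0) oo Gfps \<omega>' s0) (k - 1) + deriv (V 1) (t - s0 * \<omega> 0) * (- s0 * \<omega> (k - 1))"
    using P1 P2 T1 w0 by simp
  also have "fps_nth (shifted_V_fps V \<omega>' s0 t) k
     = fps_nth (taylor_fps (V 1) (t - s0 * \<omega>' 0) oo Gfps \<omega>' s0) (k - 1)
       + (\<Sum>j=2..k. fps_nth (taylor_fps (V j) (t - s0 * \<omega>' 0) oo Gfps \<omega>' s0) (k - j))"
    unfolding shifted_nth using k by (subst sum.atLeast_Suc_atMost) (auto simp: numeral_2_eq_2)
  ultimately show "fps_nth (shifted_V_fps V \<omega> s0 t) k = fps_nth (shifted_V_fps V \<omega>' s0 t) k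
           + deriv (V 1) (t - s0 * \<omega> 0) * (- s0 * \<omega> (k - 1))" by simp
qed



lemma shifted_nth0: "fps_nth (shifted_V_fps V \<omega> s0 t) 0 = 0"
  by (simp add: shifted_V_fps_def)

lemma dcoef_perturb:
  fixes k :: nat and \<omega> :: "nat \<Rightarrow> real"
  assumes k: "k \<ge> 2" and v0: "v0 \<noteq> 0"
  shows "dcoef U V \<omega> u0 v0 s0 k t = dcoef U V (\<lambda>j. if j \<le> k - 2 then \<omega> j else 0) u0 v0 s0 k t
           + u0 / v0 / v0 * s0 * \<omega> (k - 1) * deriv (V 1) (t - s0 * \<omega> 0)"
proof -
  define \<omega>' where "\<omega>' = (\<lambda>j. if j \<le> k - 2 then \<omega> j else 0)"
  define X where "X = U_fps U t + fps_const u0"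
  define Y where "Y = shifted_V_fps V \<omega> s0 t + fps_const v0"
  define Y' where "Y' = shifted_V_fps V \<omega>' s0 t + fps_const v0"
  note sp = shifted_perturb[OF k, of V \<omega> s0 t, folded \<omega>'_def]
  have Y0: "fps_nth Y 0 = v0" "fps_nth Y' 0 = v0" by (simp_all add: Y_def Y'_def shifted_nth0)
  have X0: "fps_nth X 0 = u0" by (simp add: X_def U_fps_def)
  have YY: "\<forall>i<k. fps_nth Y i = fps_nth Y' i" using sp(1) by (simp add: Y_def Y'_def)
  have Yk: "fps_nth Y k - fps_nth Y' k = deriv (V 1) (t - s0 * \<omega> 0) * (- s0 * \<omega> (k - 1))"
    using sp(2) k by (simp add: Y_def Y'_def)
  have "fps_nth (X * inverse Y) k = fps_nth (X * inverse Y') k - fps_nth X 0 / fps_nth Y 0 / fps_nth Y 0 * (fps_nth Y k - fps_nth Y' k)"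
    by (rule fps_div_at) (use Y0 YY k v0 in auto)
  then show ?thesis
    unfolding dcoef_def X_def[symmetric] Y_def[symmetric] Y'_def[symmetric] \<omega>'_def[symmetric]
    using X0 Y0 Yk by (simp add: algebra_simps)
qed

lemma dcoef_trunc:
  assumes v0: "v0 \<noteq> 0" and eq: "\<forall>j. 1 \<le> j \<and> j \<le> k \<longrightarrow> U j = U' j \<and> V j = V' j"
  shows "dcoef U V \<omega> u0 v0 s0 k t = dcoef U' V' \<omega> u0 v0 s0 k t"
proof -
  have "\<forall>i<Suc k. fps_nth ((U_fps U t + fps_const u0) * inverse (shifted_V_fps V \<omega> s0 t + fps_const v0)) i
     = fps_nth ((U_fps U' t + fps_const u0) * inverse (shifted_V_fps V' \<omega> s0 t + fps_const v0)) i"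
  proof (rule fps_div_below)
    show "fps_nth (shifted_V_fps V \<omega> s0 t + fps_const v0) 0 \<noteq> 0" using v0 by (simp add: shifted_nth0)
    show "fps_nth (shifted_V_fps V' \<omega> s0 t + fps_const v0) 0 = fps_nth (shifted_V_fps V \<omega> s0 t + fps_const v0) 0"
      by (simp add: shifted_nth0)
    show "\<forall>i<Suc k. fps_nth (U_fps U t + fps_const u0) i = fps_nth (U_fps U' t + fps_const u0) i"
      using eq by (auto simp: U_fps_def)
    show "\<forall>i<Suc k. fps_nth (shifted_V_fps V \<omega> s0 t + fps_const v0) i = fps_nth (shifted_V_fps V' \<omega> s0 t + fps_const v0) i"
    proof (intro allI impI)
      fix i assume "i < Suc k"
      then have "fps_nth (shifted_V_fps V \<omega> s0 t) i = fps_nth (shifted_V_fps V' \<omega> s0 t) i"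
        unfolding shifted_nth using eq by (intro sum.cong refl) auto
      then show "fps_nth (shifted_V_fps V \<omega> s0 t + fps_const v0) i = fps_nth (shifted_V_fps V' \<omega> s0 t + fps_const v0) i"
        by simp
    qed
  qed
  then show ?thesis unfolding dcoef_def by simp
qed



lemma analytic_deriv:
  assumes "real_analytic f"
  shows "((deriv ^^ m) f has_real_derivative (deriv ^^ Suc m) f x) (at x)"
proof -
  obtain r a where r: "r > 0" and sa: "\<And>y. \<bar>y - x\<bar> < r \<Longrightarrow> (\<lambda>m. a m * (y - x) ^ m) sums f y"
    using assms unfolding real_analytic_def by blast
  define Q where "Q m z = (\<Sum>n. (diffs ^^ m) a n * z ^ n)" for m and z :: real
  have summ: "\<forall>z. \<bar>z\<bar> < r \<longrightarrow> summable (\<lambda>n. (diffs ^^ m) a n * z ^ n)" for m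
  proof (induction m)
    case 0
    show ?case
    proof (intro allI impI)
      fix z :: real assume "\<bar>z\<bar> < r"
      then have "(\<lambda>m. a m * ((z + x) - x) ^ m) sums f (z + x)" by (intro sa) simp
      then show "summable (\<lambda>n. (diffs ^^ 0) a n * z ^ n)" by (simp add: sums_summable)
    qed
  next
    case (Suc m)
    show ?case
    proof (intro allI impI)
      fix z :: real assume z: "\<bar>z\<bar> < r"
      have "summable (\<lambda>n. diffs ((diffs ^^ m) a) n * z ^ n)"
        by (rule termdiff_converges[of z r]) (use z Suc in auto)
      then show "summable (\<lambda>n. (diffs ^^ Suc m) a n * z ^ n)" by simp
    qed
  qed
  have der: "(Q m has_real_derivative Q (Suc m) z) (at z)" if "\<bar>z\<bar> < r" for m z
  proof -
    have "((\<lambda>z. \<Sum>n. (diffs ^^ m) a n * z^n) has_field_derivative (\<Sum>n. diffs ((diffs ^^ m) a) n * z^n)) (at z)"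
      by (rule termdiffs_strong'[of r]) (use summ that in auto)
    then show ?thesis unfolding Q_def by simp
  qed
  have der2: "((\<lambda>y. Q m (y - x)) has_real_derivative Q (Suc m) (y - x)) (at y)" if "\<bar>y - x\<bar> < r" for m y
  proof -
    have "((\<lambda>y. y - x) has_real_derivative 1) (at y)" by (auto intro!: derivative_eq_intros)
    from DERIV_chain2[OF der[OF that] this] show ?thesis by simp
  qed
  have eq: "\<forall>y. \<bar>y - x\<bar> < r \<longrightarrow> (deriv ^^ m) f y = Q m (y - x)" for m
  proof (induction m)
    case 0
    show ?case
    proof (intro allI impI)
      fix y assume "\<bar>y - x\<bar> < r"
      from sums_unique[OF sa[OF this]] show "(deriv ^^ 0) f y = Q 0 (y - x)" by (simp add: Q_def)
    qed
  next
    case (Suc m)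
    show ?case
    proof (intro allI impI)
      fix y assume y: "\<bar>y - x\<bar> < r"
      have "((deriv ^^ m) f has_real_derivative Q (Suc m) (y - x)) (at y)"
      proof (rule has_field_derivative_transform_within_open[OF der2[OF y]])
        show "open (ball x r)" by simp
        show "y \<in> ball x r" using y by (simp add: dist_real_def abs_minus_commute)
        show "\<And>z. z \<in> ball x r \<Longrightarrow> Q m (z - x) = (deriv ^^ m) f z"
          using Suc by (simp add: dist_real_def abs_minus_commute)
      qed
      then show "(deriv ^^ Suc m) f y = Q (Suc m) (y - x)" by (simp add: DERIV_imp_deriv)
    qed
  qed
  have "((deriv ^^ m) f has_real_derivative Q (Suc m) (x - x)) (at x)"
  proof (rule has_field_derivative_transform_within_open[OF der2])
    show "\<bar>x - x\<bar> < r" using r by simp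
    show "open (ball x r)" by simp
    show "x \<in> ball x r" using r by simp
    show "\<And>z. z \<in> ball x r \<Longrightarrow> Q m (z - x) = (deriv ^^ m) f z"
      using eq by (simp add: dist_real_def abs_minus_commute)
  qed
  moreover have "(deriv ^^ Suc m) f x = Q (Suc m) (x - x)" using eq[of "Suc m"] r by (metis abs_0 diff_self)
  ultimately show ?thesis by simp
qed

lemma analytic_cont_deriv:
  assumes "real_analytic f"
  shows "continuous_on UNIV ((deriv ^^ m) f)"
  using analytic_deriv[OF assms] DERIV_isCont continuous_at_imp_continuous_on by blast

lemma analytic_zero: "real_analytic (\<lambda>_. 0)"
  unfolding real_analytic_def by (auto intro!: exI[of _ 1] exI[of _ "\<lambda>_. 0"])



lemma dcoef_cont:
  assumes v0: "v0 \<noteq> 0"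
    and cU: "\<And>j. j \<ge> 1 \<Longrightarrow> continuous_on UNIV (U j)"
    and cV: "\<And>j m. j \<ge> 1 \<Longrightarrow> continuous_on UNIV ((deriv ^^ m) (V j))"
  shows "continuous_on UNIV (\<lambda>t. dcoef U V \<omega> u0 v0 s0 k t)"
proof -
  define X where "X t = U_fps U t + fps_const u0" for t
  define Y where "Y t = shifted_V_fps V \<omega> s0 t + fps_const v0" for t
  define D where "D t = X t * inverse (Y t)" for t
  have Y0: "fps_nth (Y t) 0 = v0" for t by (simp add: Y_def shifted_nth0)
  have DY: "D t * Y t = X t" for t unfolding D_def using Y0 v0 by (simp add: mult.assoc inverse_mult_eq_1)
  have cX: "continuous_on UNIV (\<lambda>t. fps_nth (X t) i)" for i
    using cU[of i] by (cases "i = 0") (auto simp: X_def U_fps_def)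
  have cT: "continuous_on UNIV (\<lambda>t. fps_nth (taylor_fps (V j) (t - c)) l)" if "j \<ge> 1" for j l c
  proof -
    have "continuous_on UNIV (\<lambda>t. (deriv ^^ l) (V j) (t - c))"
      by (rule continuous_on_compose2[OF cV[OF that, of l]]) (auto intro!: continuous_intros)
    then show ?thesis unfolding taylor_fps_def by (auto intro!: continuous_intros)
  qed
  have cS: "continuous_on UNIV (\<lambda>t. fps_nth (shifted_V_fps V \<omega> s0 t) i)" for i
    unfolding shifted_nth fps_compose_nth
    by (intro continuous_on_sum continuous_on_mult_right cT) auto
  have cY: "continuous_on UNIV (\<lambda>t. fps_nth (Y t) i)" for i
    unfolding Y_def by (simp add: fps_add_nth) (auto intro!: continuous_intros cS)
  have "continuous_on UNIV (\<lambda>t. fps_nth (D t) i)" for i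
  proof (induction i rule: less_induct)
    case (less i)
    have "continuous_on UNIV (\<lambda>t. (fps_nth (X t) i - (\<Sum>j=0..<i. fps_nth (D t) j * fps_nth (Y t) (i-j))) / v0)"
      by (intro continuous_intros cX cY less) (use v0 in auto)
    moreover have "fps_nth (D t) i = (fps_nth (X t) i - (\<Sum>j=0..<i. fps_nth (D t) j * fps_nth (Y t) (i-j))) / v0" for t
      using fps_recur[OF DY, of t i] Y0 v0 by simp
    ultimately show ?case by simp
  qed
  then show ?thesis unfolding dcoef_def D_def X_def Y_def by simp
qed



lemma periodic_int:
  fixes g :: "real \<Rightarrow> 'b"
  assumes "\<And>t. g (t + p) = g t"
  shows "g (t + of_int k * p) = g t"
proof (induction k arbitrary: t rule: int_induct[where k = 0])
  case base then show ?case by simp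
next
  case (step1 i)
  have "g (t + of_int (i + 1) * p) = g ((t + of_int i * p) + p)" by (simp add: algebra_simps)
  also have "\<dots> = g t" using assms step1 by simp
  finally show ?case .
next
  case (step2 i)
  have "g (t + of_int (i - 1) * p) = g ((t + of_int (i - 1) * p) + p)" using assms by simp
  also have "\<dots> = g (t + of_int i * p)" by (simp add: algebra_simps)
  also have "\<dots> = g t" using step2 by simp
  finally show ?case .
qed

lemma integral_cmult:
  fixes f :: "real \<Rightarrow> complex"
  assumes "f integrable_on S"
  shows "integral S (\<lambda>x. c * f x) = c * integral S f"
  using has_integral_mult_right[OF integrable_integral[OF assms], of c] integral_unique by blast

lemma periodic_integral_shift_01:
  fixes g :: "real \<Rightarrow> complex"
  assumes cont: "continuous_on UNIV g" and per: "\<And>t. g (t + 2*pi) = g t"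
    and h: "0 \<le> h" "h \<le> 2*pi"
  shows "integral {0..2*pi} (\<lambda>t. g (t + h)) = integral {0..2*pi} g"
proof -
  have int: "g integrable_on {a..b}" for a b
    by (rule integrable_continuous_interval) (rule continuous_on_subset[OF cont], simp)
  have "integral {h - h .. 2*pi + h - h} (\<lambda>t. g (t + h)) = integral {h..2*pi + h} g"
    by (rule integral_shift_real_ivl)
  then have "integral {0..2*pi} (\<lambda>t. g (t + h)) = integral {h..2*pi + h} g" by simp
  also have "\<dots> = integral {h..2*pi} g + integral {2*pi..2*pi+h} g"
    using Henstock_Kurzweil_Integration.integral_combine[where a=h and c="2*pi" and b="2*pi+h" and f=g] int h by simp
  also have "integral {2*pi..2*pi+h} g = integral {0..h} (\<lambda>x. g (x + 2*pi))"
  proof -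
    have "integral {2*pi - 2*pi .. 2*pi + h - 2*pi} (\<lambda>x. g (x + 2*pi)) = integral {2*pi..2*pi+h} g"
      by (rule integral_shift_real_ivl)
    then show ?thesis by simp
  qed
  also have "\<dots> = integral {0..h} g" using per by simp
  also have "integral {h..2*pi} g + integral {0..h} g = integral {0..2*pi} g"
    using Henstock_Kurzweil_Integration.integral_combine[where a=0 and c=h and b="2*pi" and f=g] int h by (simp add: add.commute)
  finally show ?thesis .
qed

lemma periodic_integral_shift:
  fixes g :: "real \<Rightarrow> complex"
  assumes cont: "continuous_on UNIV g" and per: "\<And>t. g (t + 2*pi) = g t"
  shows "integral {0..2*pi} (\<lambda>t. g (t + c)) = integral {0..2*pi} g"
proof -
  define q where "q = \<lfloor>c / (2*pi)\<rfloor>"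
  define h where "h = c - of_int q * (2*pi)"
  have q1: "of_int q \<le> c / (2*pi)" and q2: "c / (2*pi) < of_int q + 1"
    unfolding q_def by linarith+
  have h0: "0 \<le> h" using q1 by (simp add: h_def field_simps)
  have h1: "h \<le> 2*pi" using q2 by (simp add: h_def field_simps)
  have "g (t + c) = g (t + h)" for t
    using periodic_int[of g "2*pi" "t + h" q] per by (simp add: h_def algebra_simps)
  then have "integral {0..2*pi} (\<lambda>t. g (t + c)) = integral {0..2*pi} (\<lambda>t. g (t + h))" by simp
  also have "\<dots> = integral {0..2*pi} g" by (rule periodic_integral_shift_01[OF cont per h0 h1])
  finally show ?thesis .
qed

lemma cis_vd: "((\<lambda>t. cis (b * t)) has_vector_derivative (of_real b * \<i> * cis (b * t))) (at t within S)"
proof -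
  have "((\<lambda>t. cis (b * t)) has_derivative (\<lambda>h. (b * h) *\<^sub>R (\<i> * cis (b * t)))) (at t within S)"
    by (rule has_derivative_cis) (auto intro!: derivative_eq_intros)
  moreover have "(\<lambda>h. (b * h) *\<^sub>R (\<i> * cis (b * t))) = (\<lambda>h. h *\<^sub>R (of_real b * \<i> * cis (b * t)))"
    by (auto simp: scaleR_conv_of_real)
  ultimately show ?thesis unfolding has_vector_derivative_def by simp
qed

lemma fcoeff_deriv_shift:
  assumes an: "real_analytic V" and per: "periodic_2pi V"
  shows "fcoeff (\<lambda>t. deriv V (t - a)) n = of_int n * \<i> * fcoeff V n * exp (- (of_int n * \<i> * of_real a))"
proof -
  define b where "b = - real_of_int n"
  have cV: "continuous_on UNIV V" using analytic_cont_deriv[OF an, of 0] by simp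
  have cV': "continuous_on UNIV (deriv V)" using analytic_cont_deriv[OF an, of 1] by simp
  have dV: "(V has_real_derivative deriv V x) (at x)" for x using analytic_deriv[OF an, of 0 x] by simp
  have cVa: "continuous_on UNIV (\<lambda>t. V (t - a))"
    by (rule continuous_on_compose2[OF cV]) (auto intro!: continuous_intros)
  have cVa': "continuous_on UNIV (\<lambda>t. deriv V (t - a))"
    by (rule continuous_on_compose2[OF cV']) (auto intro!: continuous_intros)
  define I0 where "I0 t = complex_of_real (V (t - a)) * cis (b * t)" for t
  define I1 where "I1 t = complex_of_real (deriv V (t - a)) * cis (b * t)" for t
  have cI0: "continuous_on UNIV I0" unfolding I0_def by (auto intro!: continuous_intros cVa)
  have cI1: "continuous_on UNIV I1" unfolding I1_def by (auto intro!: continuous_intros cVa')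
  have iI0: "I0 integrable_on {0..2*pi}" by (rule integrable_continuous_interval, rule continuous_on_subset[OF cI0]) simp
  have iI1: "I1 integrable_on {0..2*pi}" by (rule integrable_continuous_interval, rule continuous_on_subset[OF cI1]) simp
  have iI0': "(\<lambda>t. of_real b * \<i> * I0 t) integrable_on {0..2*pi}" by (rule integrable_on_mult_right[OF iI0])
  define Phi where "Phi t = complex_of_real (V (t - a)) * cis (b * t)" for t
  have dPhi: "(Phi has_vector_derivative (of_real b * \<i> * I0 t + I1 t)) (at t within {0..2*pi})" for t
  proof -
    have d1: "((\<lambda>t. V (t - a)) has_real_derivative deriv V (t - a)) (at t within {0..2*pi})"
    proof -
      have "((\<lambda>t. t - a) has_real_derivative 1 - 0) (at t)" by (rule DERIV_diff[OF DERIV_ident DERIV_const])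
      from DERIV_chain2[OF dV this] have "((\<lambda>t. V (t - a)) has_real_derivative deriv V (t - a)) (at t)" by simp
      then show ?thesis by (rule has_field_derivative_at_within)
    qed
    have "(Phi has_vector_derivative (complex_of_real (V (t - a)) * (of_real b * \<i> * cis (b * t))
            + complex_of_real (deriv V (t - a)) * cis (b * t))) (at t within {0..2*pi})"
      unfolding Phi_def by (rule has_vector_derivative_mult[OF has_vector_derivative_of_real[OF d1] cis_vd])
    then show ?thesis by (simp add: I0_def I1_def algebra_simps)
  qed
  have "((\<lambda>t. of_real b * \<i> * I0 t + I1 t) has_integral (Phi (2*pi) - Phi 0)) {0..2*pi}"
    by (rule fundamental_theorem_of_calculus) (use dPhi in auto)
  moreover have "Phi (2*pi) = Phi 0"
  proof -
    have "V (2*pi - a) = V (- a)" using per unfolding periodic_2pi_def by (metis add.commute diff_conv_add_uminus)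
    moreover have "cis (b * (2*pi)) = 1"
      using cis_multiple_2pi[of "of_int (- n)"] by (simp add: b_def mult.commute)
    ultimately show ?thesis by (simp add: Phi_def)
  qed
  ultimately have "integral {0..2*pi} (\<lambda>t. of_real b * \<i> * I0 t + I1 t) = 0" by (simp add: integral_unique)
  then have "of_real b * \<i> * integral {0..2*pi} I0 + integral {0..2*pi} I1 = 0"
    by (simp add: integral_add[OF iI0' iI1] integral_cmult[OF iI0])
  then have eq1: "integral {0..2*pi} I1 = - (of_real b * \<i>) * integral {0..2*pi} I0"
    by (simp add: algebra_simps add_eq_0_iff)
  define g where "g s = complex_of_real (V s) * cis (b * s)" for s
  have cg: "continuous_on UNIV g" unfolding g_def by (auto intro!: continuous_intros cV)
  have pg: "g (t + 2*pi) = g t" for t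
  proof -
    have "cis (b * (t + 2*pi)) = cis (b * t) * cis (2 * pi * of_int (- n))"
      by (simp add: cis_mult b_def algebra_simps)
    also have "\<dots> = cis (b * t)" by (subst cis_multiple_2pi) auto
    finally show ?thesis using per unfolding g_def periodic_2pi_def by simp
  qed
  have I0g: "I0 t = cis (b * a) * g (t + - a)" for t
    by (simp add: I0_def g_def cis_mult algebra_simps)
  have ig: "(\<lambda>t. g (t + - a)) integrable_on {0..2*pi}"
    by (rule integrable_continuous_interval, rule continuous_on_compose2[OF cg]) (auto intro!: continuous_intros)
  have "integral {0..2*pi} I0 = cis (b * a) * integral {0..2*pi} (\<lambda>t. g (t + - a))"
    unfolding I0g by (rule integral_cmult[OF ig])
  also have "integral {0..2*pi} (\<lambda>t. g (t + - a)) = integral {0..2*pi} g"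
    by (rule periodic_integral_shift[OF cg pg])
  finally have eq0: "integral {0..2*pi} I0 = cis (b * a) * integral {0..2*pi} g" .
  have fV: "fcoeff V n = integral {0..2*pi} g / complex_of_real (2*pi)"
    unfolding fcoeff_def g_def b_def by (simp add: algebra_simps)
  have fV': "fcoeff (\<lambda>t. deriv V (t - a)) n = integral {0..2*pi} I1 / complex_of_real (2*pi)"
    unfolding fcoeff_def I1_def b_def by (simp add: algebra_simps)
  have ex: "cis (b * a) = exp (- (of_int n * \<i> * of_real a))"
    unfolding cis_conv_exp b_def by (simp add: algebra_simps)
  show ?thesis unfolding fV' fV eq1 eq0 ex by (simp add: b_def algebra_simps)
qed



lemma cis_eq_periodic:
  assumes per: "periodic_2pi f" and eq: "cis a = cis b"
  shows "f a = f b"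
proof -
  from eq have "exp (\<i> * of_real a) = exp (\<i> * of_real b)" by (simp add: cis_conv_exp)
  then obtain n :: int where "\<i> * of_real a = \<i> * of_real b + (of_int (2 * n) * pi) * \<i>"
    unfolding exp_eq by blast
  then have "Im (\<i> * of_real a) = Im (\<i> * of_real b + (of_int (2 * n) * pi) * \<i>)" by simp
  then have "a = b + of_int n * (2 * pi)" by simp
  moreover have "f (b + of_int n * (2 * pi)) = f b"
    by (rule periodic_int) (use per in \<open>auto simp: periodic_2pi_def\<close>)
  ultimately show ?thesis by simp
qed

inductive_set trigp :: "(real \<Rightarrow> complex) set" where
  tp_cis: "(\<lambda>t. c * cis (of_int m * t)) \<in> trigp"
| tp_add: "f \<in> trigp \<Longrightarrow> g \<in> trigp \<Longrightarrow> (\<lambda>t. f t + g t) \<in> trigp"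

lemma trigp_mult_cis:
  assumes "g \<in> trigp"
  shows "(\<lambda>t. c * cis (of_int m * t) * g t) \<in> trigp"
  using assms
proof induction
  case (tp_cis d m')
  have "(\<lambda>t. (c * d) * cis (of_int (m + m') * t)) \<in> trigp" by (rule trigp.tp_cis)
  moreover have "(\<lambda>t. (c * d) * cis (of_int (m + m') * t)) = (\<lambda>t. c * cis (of_int m * t) * (d * cis (of_int m' * t)))"
    by (auto simp: cis_mult algebra_simps)
  ultimately show ?case by simp
next
  case (tp_add f g)
  from trigp.tp_add[OF tp_add.IH] show ?case by (simp add: algebra_simps)
qed

lemma trigp_mult:
  assumes "f \<in> trigp" "g \<in> trigp"
  shows "(\<lambda>t. f t * g t) \<in> trigp"
  using assms(1)
proof induction
  case (tp_cis c m)
  show ?case by (rule trigp_mult_cis[OF assms(2)])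
next
  case (tp_add f1 f2)
  from trigp.tp_add[OF tp_add.IH] show ?case by (simp add: algebra_simps)
qed

lemma fcoeff_integrable:
  assumes "continuous_on UNIV f"
  shows "(\<lambda>t. complex_of_real (f t) * cis (- (of_int n * t))) integrable_on {0..2*pi}"
  by (rule integrable_continuous_interval) (auto intro!: continuous_intros continuous_on_subset[OF assms])

lemma trigp_orth:
  assumes cf: "continuous_on UNIV f" and fc: "\<forall>m. fcoeff f m = 0" and h: "h \<in> trigp"
  shows "continuous_on UNIV h \<and> integral {0..2*pi} (\<lambda>t. complex_of_real (f t) * h t) = 0"
  using h
proof induction
  case (tp_cis c m)
  have "integral {0..2*pi} (\<lambda>t. complex_of_real (f t) * cis (- (of_int (-m) * t))) = 0"
    using fc unfolding fcoeff_def by (metis divide_eq_0_iff of_real_eq_0_iff pi_neq_zero mult_eq_0_iff zero_neq_numeral)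
  then have "integral {0..2*pi} (\<lambda>t. c * (complex_of_real (f t) * cis (- (of_int (-m) * t)))) = 0"
    using integral_cmult[OF fcoeff_integrable[OF cf, of "-m"], of c] by simp
  then show ?case by (auto intro!: continuous_intros simp: algebra_simps)
next
  case (tp_add g1 g2)
  have i1: "(\<lambda>t. complex_of_real (f t) * g1 t) integrable_on {0..2*pi}"
    by (rule integrable_continuous_interval) (use tp_add in \<open>auto intro!: continuous_intros continuous_on_subset[OF cf] continuous_on_subset[of UNIV g1]\<close>)
  have i2: "(\<lambda>t. complex_of_real (f t) * g2 t) integrable_on {0..2*pi}"
    by (rule integrable_continuous_interval) (use tp_add in \<open>auto intro!: continuous_intros continuous_on_subset[OF cf] continuous_on_subset[of UNIV g2]\<close>)
  show ?case using tp_add integral_add[OF i1 i2] by (auto intro!: continuous_intros simp: algebra_simps)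
qed

lemma poly_trigp:
  fixes p :: "complex \<Rightarrow> real"
  assumes "real_polynomial_function p"
  shows "(\<lambda>t. complex_of_real (p (cis t))) \<in> trigp"
  using assms
proof induction
  case (linear l)
  define A where "A = l 1"
  define B where "B = l \<i>"
  have lc: "l (cis t) = cos t * A + sin t * B" for t
  proof -
    have "cis t = cos t *\<^sub>R 1 + sin t *\<^sub>R \<i>" by (simp add: complex_eq_iff)
    then show ?thesis using linear unfolding A_def B_def
      by (simp add: bounded_linear.linear linear_add linear_scale)
  qed
  have "(\<lambda>t. ((of_real A - \<i> * of_real B) / 2) * cis (of_int 1 * t) + ((of_real A + \<i> * of_real B) / 2) * cis (of_int (-1) * t)) \<in> trigp"
    by (rule tp_add[OF tp_cis tp_cis])
  moreover have "(\<lambda>t. ((of_real A - \<i> * of_real B) / 2) * cis (of_int 1 * t) + ((of_real A + \<i> * of_real B) / 2) * cis (of_int (-1) * t))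
      = (\<lambda>t. complex_of_real (l (cis t)))"
    by (auto simp: lc complex_eq_iff field_simps)
  ultimately show ?case by simp
next
  case (const c)
  have "(\<lambda>t. complex_of_real c * cis (of_int 0 * t)) \<in> trigp" by (rule tp_cis)
  then show ?case by simp
next
  case (add f g)
  from tp_add[OF add.IH] show ?case by simp
next
  case (mult f g)
  from trigp_mult[OF mult.IH] show ?case by simp
qed



lemma F_cont:
  assumes cf: "continuous_on UNIV f" and per: "periodic_2pi f"
  shows "continuous_on (sphere 0 1) (\<lambda>z::complex. f (Arg z))"
proof (rule continuous_at_imp_continuous_on, intro ballI)
  fix z :: complex assume z: "z \<in> sphere 0 1"
  have fc: "isCont f x" for x using cf by (simp add: continuous_on_eq_continuous_at)
  show "isCont (\<lambda>z. f (Arg z)) z"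
  proof (cases "z \<in> \<real>\<^sub>\<le>\<^sub>0")
    case False
    show ?thesis by (rule continuous_at_compose[OF continuous_at_Arg[OF False] fc, unfolded o_def])
  next
    case True
    then have nz: "z \<notin> \<real>\<^sub>\<ge>\<^sub>0" using z by (auto simp: nonpos_Reals_def nonneg_Reals_def)
    have c2: "isCont (\<lambda>z. f (Arg2pi z)) z"
      by (rule continuous_at_compose[OF continuous_at_Arg2pi[OF nz] fc, unfolded o_def])
    have eq: "f (Arg w) = f (Arg2pi w)" if "w \<noteq> 0" for w
    proof (rule cis_eq_periodic[OF per])
      have e: "w = of_real (cmod w) * exp (\<i> * of_real (Arg2pi w))" by (rule Arg2pi_eq)
      have "exp (\<i> * of_real (Arg2pi w)) = w / of_real (cmod w)"
        using that by (subst (2) e) (simp add: field_simps)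
      then have "cis (Arg2pi w) = sgn w"
        by (simp add: cis_conv_exp sgn_div_norm scaleR_conv_of_real field_simps)
      then show "cis (Arg w) = cis (Arg2pi w)" using cis_Arg[OF that] by simp
    qed
    have "eventually (\<lambda>w. f (Arg w) = f (Arg2pi w)) (nhds z)"
    proof (rule eventually_nhds_in_open[of "- {0}", THEN eventually_mono])
      show "open (- {0::complex})" by auto
      show "z \<in> - {0}" using z by auto
    qed (use eq in auto)
    from isCont_cong[OF this] c2 show ?thesis by simp
  qed
qed

lemma fourier_zero_01:
  assumes cf: "continuous_on UNIV f" and per: "periodic_2pi f" and fc: "\<forall>m. fcoeff f m = 0"
    and t: "t \<in> {0..2*pi}"
  shows "f t = 0"
proof -
  have cf01: "continuous_on {0..2*pi} f" using cf continuous_on_subset by blast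
  have iff: "(\<lambda>t. f t * f t) integrable_on {0..2*pi}"
    by (rule integrable_continuous_interval) (auto intro!: continuous_intros cf01)
  have iabs: "(\<lambda>t. \<bar>f t\<bar>) integrable_on {0..2*pi}"
    by (rule integrable_continuous_interval) (auto intro!: continuous_intros cf01)
  define A where "A = integral {0..2*pi} (\<lambda>t. \<bar>f t\<bar>)"
  have A0: "A \<ge> 0" unfolding A_def by (rule integral_nonneg[OF iabs]) simp
  have bound: "integral {0..2*pi} (\<lambda>t. f t * f t) \<le> e * A" if e: "e > 0" for e
  proof -
    obtain p where p: "real_polynomial_function p" and pe: "\<And>z. z \<in> sphere 0 1 \<Longrightarrow> \<bar>f (Arg z) - p z\<bar> < e"
      using Stone_Weierstrass_real_polynomial_function[OF compact_sphere F_cont[OF cf per] e] by blast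
    define \<phi> where "\<phi> t = p (cis t)" for t
    have close: "\<bar>f t - \<phi> t\<bar> < e" for t
    proof -
      have "f (Arg (cis t)) = f t"
        by (rule cis_eq_periodic[OF per]) (simp add: cis_Arg)
      then show ?thesis using pe[of "cis t"] by (simp add: \<phi>_def)
    qed
    have tp: "(\<lambda>t. complex_of_real (\<phi> t)) \<in> trigp" unfolding \<phi>_def by (rule poly_trigp[OF p])
    note orth = trigp_orth[OF cf fc tp]
    have cphi: "continuous_on UNIV \<phi>"
    proof -
      have "continuous_on UNIV (\<lambda>t. Re (complex_of_real (\<phi> t)))"
        using orth by (auto intro!: continuous_intros)
      then show ?thesis by simp
    qed
    have ifp: "(\<lambda>t. f t * \<phi> t) integrable_on {0..2*pi}"
      by (rule integrable_continuous_interval) (auto intro!: continuous_intros cf01 continuous_on_subset[OF cphi])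
    have ifd: "(\<lambda>t. f t * (f t - \<phi> t)) integrable_on {0..2*pi}"
      by (rule integrable_continuous_interval) (auto intro!: continuous_intros cf01 continuous_on_subset[OF cphi])
    have "complex_of_real (integral {0..2*pi} (\<lambda>t. f t * \<phi> t)) = integral {0..2*pi} (\<lambda>t. complex_of_real (f t * \<phi> t))"
      using has_integral_of_real[OF integrable_integral[OF ifp]] integral_unique by (metis (no_types))
    also have "\<dots> = 0" using orth by simp
    finally have z: "integral {0..2*pi} (\<lambda>t. f t * \<phi> t) = 0" by simp
    have "integral {0..2*pi} (\<lambda>t. f t * f t) = integral {0..2*pi} (\<lambda>t. f t * (f t - \<phi> t)) + integral {0..2*pi} (\<lambda>t. f t * \<phi> t)"
      using integral_add[OF ifd ifp] by (simp add: algebra_simps)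
    also have "\<dots> = integral {0..2*pi} (\<lambda>t. f t * (f t - \<phi> t))" using z by simp
    also have "\<dots> \<le> integral {0..2*pi} (\<lambda>t. e * \<bar>f t\<bar>)"
    proof (rule integral_le[OF ifd])
      show "(\<lambda>t. e * \<bar>f t\<bar>) integrable_on {0..2*pi}" using iabs by (rule integrable_on_mult_right)
      fix t
      have "f t * (f t - \<phi> t) \<le> \<bar>f t\<bar> * \<bar>f t - \<phi> t\<bar>" by (metis abs_ge_self abs_mult)
      also have "\<dots> \<le> \<bar>f t\<bar> * e" using close[of t] by (intro mult_left_mono) auto
      finally show "f t * (f t - \<phi> t) \<le> e * \<bar>f t\<bar>" by (simp add: mult.commute)
    qed
    also have "\<dots> = e * A" unfolding A_def by simp
    finally show ?thesis .
  qed
  have le0: "integral {0..2*pi} (\<lambda>t. f t * f t) \<le> 0"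
  proof (rule field_le_epsilon)
    fix d :: real assume d: "d > 0"
    have "integral {0..2*pi} (\<lambda>t. f t * f t) \<le> (d / (A + 1)) * A" using bound[of "d / (A+1)"] d A0 by simp
    also have "\<dots> \<le> d" using d A0 by (simp add: field_simps)
    finally show "integral {0..2*pi} (\<lambda>t. f t * f t) \<le> 0 + d" by simp
  qed
  have ge0: "integral {0..2*pi} (\<lambda>t. f t * f t) \<ge> 0" by (rule integral_nonneg[OF iff]) simp
  have "((\<lambda>t. f t * f t) has_integral 0) (cbox 0 (2*pi))"
    using integrable_integral[OF iff] le0 ge0 by simp
  moreover have "continuous_on (cbox 0 (2*pi)) (\<lambda>t. f t * f t)" by (auto intro!: continuous_intros cf01)
  moreover have "box 0 (2*pi) \<noteq> {}" using pi_gt_zero by (simp add: not_le[symmetric])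
  ultimately have "f t * f t = 0"
    using has_integral_0_cbox_imp_0[of 0 "2*pi" "\<lambda>t. f t * f t" t] t by simp
  then show ?thesis by simp
qed

lemma fourier_zero:
  assumes cf: "continuous_on UNIV f" and per: "periodic_2pi f" and fc: "\<forall>m. fcoeff f m = 0"
  shows "f t = 0"
proof -
  define q where "q = \<lfloor>t / (2*pi)\<rfloor>"
  define h where "h = t - of_int q * (2*pi)"
  have q1: "of_int q \<le> t / (2*pi)" and q2: "t / (2*pi) < of_int q + 1"
    unfolding q_def by linarith+
  have h0: "0 \<le> h" using q1 by (simp add: h_def field_simps)
  have h1: "h \<le> 2*pi" using q2 by (simp add: h_def field_simps)
  have "f t = f (h + of_int q * (2*pi))" by (simp add: h_def)
  also have "\<dots> = f h" by (rule periodic_int) (use per in \<open>auto simp: periodic_2pi_def\<close>)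
  also have "\<dots> = 0" by (rule fourier_zero_01[OF cf per fc]) (use h0 h1 in auto)
  finally show ?thesis .
qed

lemma fcoeff_diff:
  assumes "continuous_on UNIV f" "continuous_on UNIV g"
  shows "fcoeff (\<lambda>t. f t - g t) m = fcoeff f m - fcoeff g m"
proof -
  have "integral {0..2*pi} (\<lambda>t. complex_of_real (f t - g t) * cis (- (of_int m * t)))
      = integral {0..2*pi} (\<lambda>t. complex_of_real (f t) * cis (- (of_int m * t)) - complex_of_real (g t) * cis (- (of_int m * t)))"
    by (simp add: algebra_simps)
  also have "\<dots> = integral {0..2*pi} (\<lambda>t. complex_of_real (f t) * cis (- (of_int m * t))) - integral {0..2*pi} (\<lambda>t. complex_of_real (g t) * cis (- (of_int m * t)))"
    by (rule integral_diff[OF fcoeff_integrable[OF assms(1)] fcoeff_integrable[OF assms(2)]])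
  finally show ?thesis unfolding fcoeff_def by (simp add: diff_divide_distrib)
qed

lemma fcoeff_add:
  assumes "continuous_on UNIV f" "continuous_on UNIV g"
  shows "fcoeff (\<lambda>t. f t + g t) m = fcoeff f m + fcoeff g m"
proof -
  have "integral {0..2*pi} (\<lambda>t. complex_of_real (f t + g t) * cis (- (of_int m * t)))
      = integral {0..2*pi} (\<lambda>t. complex_of_real (f t) * cis (- (of_int m * t)) + complex_of_real (g t) * cis (- (of_int m * t)))"
    by (simp add: algebra_simps)
  also have "\<dots> = integral {0..2*pi} (\<lambda>t. complex_of_real (f t) * cis (- (of_int m * t))) + integral {0..2*pi} (\<lambda>t. complex_of_real (g t) * cis (- (of_int m * t)))"
    by (rule integral_add[OF fcoeff_integrable[OF assms(1)] fcoeff_integrable[OF assms(2)]])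
  finally show ?thesis unfolding fcoeff_def by (simp add: add_divide_distrib)
qed

lemma fcoeff_cmult:
  assumes "continuous_on UNIV f"
  shows "fcoeff (\<lambda>t. c * f t) m = complex_of_real c * fcoeff f m"
proof -
  have "integral {0..2*pi} (\<lambda>t. complex_of_real (c * f t) * cis (- (of_int m * t)))
      = integral {0..2*pi} (\<lambda>t. complex_of_real c * (complex_of_real (f t) * cis (- (of_int m * t))))"
    by (simp add: algebra_simps)
  also have "\<dots> = complex_of_real c * integral {0..2*pi} (\<lambda>t. complex_of_real (f t) * cis (- (of_int m * t)))"
    by (rule integral_cmult[OF fcoeff_integrable[OF assms]])
  finally show ?thesis unfolding fcoeff_def by simp
qed

lemma fourier_unique:
  assumes "continuous_on UNIV f" "continuous_on UNIV g" "periodic_2pi f" "periodic_2pi g"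
    and "\<forall>m. fcoeff f m = fcoeff g m"
  shows "f = g"
proof (rule ext)
  fix t
  have "(\<lambda>t. f t - g t) t = 0"
  proof (rule fourier_zero[of "\<lambda>t. f t - g t"])
    show "continuous_on UNIV (\<lambda>t. f t - g t)" using assms by (auto intro!: continuous_intros)
    show "periodic_2pi (\<lambda>t. f t - g t)" using assms by (simp add: periodic_2pi_def)
    show "\<forall>m. fcoeff (\<lambda>t. f t - g t) m = 0" using assms fcoeff_diff by simp
  qed
  then show "f t = g t" by simp
qed



theorem lemma3:
  fixes u0 v0 s0 :: real and k :: nat and n :: int
  assumes "u0 > 0" and "v0 > 0" and "s0 > 1" and "k \<ge> 2"
  shows "\<exists>H :: (nat \<Rightarrow> int \<Rightarrow> complex) \<Rightarrow> (nat \<Rightarrow> int \<Rightarrow> complex) \<Rightarrow> (nat \<Rightarrow> real) \<Rightarrow> complex.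
    \<forall>(U :: nat \<Rightarrow> real \<Rightarrow> real) (V :: nat \<Rightarrow> real \<Rightarrow> real) (\<omega> :: nat \<Rightarrow> real).
      \<omega> 0 > 0 \<longrightarrow>
      (\<forall>j\<ge>1. real_analytic (U j) \<and> periodic_2pi (U j) \<and>
              real_analytic (V j) \<and> periodic_2pi (V j)) \<longrightarrow>
      fcoeff (dcoef U V \<omega> u0 v0 s0 k) n =
        complex_of_real (u0 / v0 / v0) * of_int n * \<i> * complex_of_real (\<omega> (k - 1) * s0)
          * fcoeff (V 1) n * exp (- (of_int n * \<i> * complex_of_real (\<omega> 0 * s0)))
        + H (\<lambda>j m. if 1 \<le> j \<and> j \<le> k then fcoeff (U j) m else 0)
            (\<lambda>j m. if 1 \<le> j \<and> j \<le> k then fcoeff (V j) m else 0)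
            (\<lambda>j. if j \<le> k - 2 then \<omega> j else 0)"
proof -
  have v0: "v0 \<noteq> 0" using assms by simp
  define P where "P U V \<longleftrightarrow> (\<forall>j\<ge>1. real_analytic (U j) \<and> periodic_2pi (U j) \<and>
              real_analytic (V j) \<and> periodic_2pi (V j))" for U V :: "nat \<Rightarrow> real \<Rightarrow> real"
  define dU where "dU U = (\<lambda>j m. if 1 \<le> j \<and> j \<le> k then fcoeff (U j) m else 0)" for U :: "nat \<Rightarrow> real \<Rightarrow> real"
  define tr where "tr U = (\<lambda>j. if 1 \<le> j \<and> j \<le> k then U j else (\<lambda>_::real. 0::real))" for U :: "nat \<Rightarrow> real \<Rightarrow> real"
  define sel where "sel Uh Vh = (SOME p. P (fst p) (snd p) \<and> dU (fst p) = Uh \<and> dU (snd p) = Vh)" for Uh Vh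
  define H where "H Uh Vh w = fcoeff (dcoef (tr (fst (sel Uh Vh))) (tr (snd (sel Uh Vh))) w u0 v0 s0 k) n" for Uh Vh w
  show ?thesis
  proof (rule exI[of _ H], intro allI impI)
    fix U V :: "nat \<Rightarrow> real \<Rightarrow> real" and \<omega> :: "nat \<Rightarrow> real"
    assume w0: "\<omega> 0 > 0" and PUV0: "\<forall>j\<ge>1. real_analytic (U j) \<and> periodic_2pi (U j) \<and> real_analytic (V j) \<and> periodic_2pi (V j)"
    have PUV: "P U V" using PUV0 by (simp add: P_def)
    define \<omega>' where "\<omega>' = (\<lambda>j. if j \<le> k - 2 then \<omega> j else 0)"
    define p where "p = sel (dU U) (dU V)"
    have "P (fst p) (snd p) \<and> dU (fst p) = dU U \<and> dU (snd p) = dU V"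
      unfolding p_def sel_def by (rule someI[of _ "(U, V)"]) (use PUV in simp)
    then have Pp: "P (fst p) (snd p)" and dpU: "dU (fst p) = dU U" and dpV: "dU (snd p) = dU V" by auto
    have an_cont: "continuous_on UNIV f" if "real_analytic f" for f
      using analytic_cont_deriv[OF that, of 0] by simp
    have eqU: "fst p j = U j" if "1 \<le> j" "j \<le> k" for j
    proof (rule fourier_unique)
      show "continuous_on UNIV (fst p j)" "periodic_2pi (fst p j)" using Pp that an_cont by (auto simp: P_def)
      show "continuous_on UNIV (U j)" "periodic_2pi (U j)" using PUV that an_cont by (auto simp: P_def)
      show "\<forall>m. fcoeff (fst p j) m = fcoeff (U j) m"
        using dpU that unfolding dU_def by (metis (no_types, lifting))
    qed
    have eqV: "snd p j = V j" if "1 \<le> j" "j \<le> k" for j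
    proof (rule fourier_unique)
      show "continuous_on UNIV (snd p j)" "periodic_2pi (snd p j)" using Pp that an_cont by (auto simp: P_def)
      show "continuous_on UNIV (V j)" "periodic_2pi (V j)" using PUV that an_cont by (auto simp: P_def)
      show "\<forall>m. fcoeff (snd p j) m = fcoeff (V j) m"
        using dpV that unfolding dU_def by (metis (no_types, lifting))
    qed
    have trU: "tr (fst p) = tr U" unfolding tr_def using eqU by auto
    have trV: "tr (snd p) = tr V" unfolding tr_def using eqV by auto
    have Hval: "H (dU U) (dU V) \<omega>' = fcoeff (dcoef (tr U) (tr V) \<omega>' u0 v0 s0 k) n"
      unfolding H_def p_def[symmetric] trU trV ..
    define c where "c = u0 / v0 / v0 * s0 * \<omega> (k - 1)"
    define a where "a = s0 * \<omega> 0"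
    have dsplit: "dcoef U V \<omega> u0 v0 s0 k t = dcoef (tr U) (tr V) \<omega>' u0 v0 s0 k t + c * deriv (V 1) (t - a)" for t
    proof -
      have "dcoef U V \<omega> u0 v0 s0 k t = dcoef U V \<omega>' u0 v0 s0 k t + c * deriv (V 1) (t - a)"
        unfolding \<omega>'_def c_def a_def by (rule dcoef_perturb[OF assms(4) v0])
      also have "dcoef U V \<omega>' u0 v0 s0 k t = dcoef (tr U) (tr V) \<omega>' u0 v0 s0 k t"
        by (rule dcoef_trunc[OF v0]) (auto simp: tr_def)
      finally show ?thesis .
    qed
    have antr: "real_analytic (tr F j)" if "\<And>j. j \<ge> 1 \<Longrightarrow> real_analytic (F j)" "j \<ge> 1" for F j
      using that analytic_zero by (auto simp: tr_def)
    have cD: "continuous_on UNIV (\<lambda>t. dcoef (tr U) (tr V) \<omega>' u0 v0 s0 k t)"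
    proof (rule dcoef_cont[OF v0])
      show "continuous_on UNIV (tr U j)" if "j \<ge> 1" for j
        using an_cont[OF antr[of U j]] PUV that by (auto simp: P_def)
      show "continuous_on UNIV ((deriv ^^ m) (tr V j))" if "j \<ge> 1" for j m
        using analytic_cont_deriv[OF antr[of V j]] PUV that by (auto simp: P_def)
    qed
    have anV1: "real_analytic (V 1)" and perV1: "periodic_2pi (V 1)" using PUV by (auto simp: P_def)
    have cdV: "continuous_on UNIV (\<lambda>t. deriv (V 1) (t - a))"
    proof -
      have "continuous_on UNIV (deriv (V 1))" using analytic_cont_deriv[OF anV1, of 1] by simp
      then show ?thesis by (rule continuous_on_compose2) (auto intro!: continuous_intros)
    qed
    have "fcoeff (dcoef U V \<omega> u0 v0 s0 k) n = fcoeff (\<lambda>t. dcoef (tr U) (tr V) \<omega>' u0 v0 s0 k t + c * deriv (V 1) (t - a)) n"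
      using dsplit by presburger
    also have "\<dots> = fcoeff (\<lambda>t. dcoef (tr U) (tr V) \<omega>' u0 v0 s0 k t) n + fcoeff (\<lambda>t. c * deriv (V 1) (t - a)) n"
      by (rule fcoeff_add[OF cD]) (intro continuous_intros cdV)
    also have "fcoeff (\<lambda>t. c * deriv (V 1) (t - a)) n = complex_of_real c * fcoeff (\<lambda>t. deriv (V 1) (t - a)) n"
      by (rule fcoeff_cmult[OF cdV])
    also have "fcoeff (\<lambda>t. deriv (V 1) (t - a)) n = of_int n * \<i> * fcoeff (V 1) n * exp (- (of_int n * \<i> * of_real a))"
      by (rule fcoeff_deriv_shift[OF anV1 perV1])
    finally have "fcoeff (dcoef U V \<omega> u0 v0 s0 k) n = H (dU U) (dU V) \<omega>' +
        complex_of_real c * (of_int n * \<i> * fcoeff (V 1) n * exp (- (of_int n * \<i> * of_real a)))"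
      using Hval by simp
    then show "fcoeff (dcoef U V \<omega> u0 v0 s0 k) n =
        complex_of_real (u0 / v0 / v0) * of_int n * \<i> * complex_of_real (\<omega> (k - 1) * s0)
          * fcoeff (V 1) n * exp (- (of_int n * \<i> * complex_of_real (\<omega> 0 * s0)))
        + H (\<lambda>j m. if 1 \<le> j \<and> j \<le> k then fcoeff (U j) m else 0)
            (\<lambda>j m. if 1 \<le> j \<and> j \<le> k then fcoeff (V j) m else 0)
            (\<lambda>j. if j \<le> k - 2 then \<omega> j else 0)"
      unfolding dU_def[symmetric] \<omega>'_def[symmetric] c_def a_def
      by (simp add: algebra_simps)
  qed
qed

end
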